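(* Let $T$ be a tree with at least two vertices. If $\mathcal{M}$ is a maximal $2$-matching of $T$, then there exist leaves $u\neq v$ of $T$ such that $E(P_{u,v})\subseteq\mathcal{M}$, where $P_{u,v}$ is the unique path in $T$ joining $u$ and $v$.
   Context: A $2$-matching of a graph is a set of edges such that every vertex is incident to at most two of them. A $2$-matching $\mathcal{M}$ is maximal if there is no $2$-matching $\mathcal{N}$ with $\mathcal{M}\subsetneq\mathcal{N}$. A leaf is a vertex of degree one. *)

theory Defs
  imports Main
begin

definition simple_graph :: "'a set \<Rightarrow> 'a set set \<Rightarrow> bool" where
  "simple_graph V E \<longleftrightarrow> finite V \<and>
     (\<forall>e\<in>E. \<exists>x y. x \<noteq> y \<and> x \<in> V \<and> y \<in> V \<and> e = {x, y})"

fun path_edges :: "'a list \<Rightarrow> 'a set set" where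
  "path_edges (x # y # xs) = insert {x, y} (path_edges (y # xs))"
| "path_edges _ = {}"

definition is_path :: "'a set \<Rightarrow> 'a set set \<Rightarrow> 'a list \<Rightarrow> 'a \<Rightarrow> 'a \<Rightarrow> bool" where
  "is_path V E p u v \<longleftrightarrow> p \<noteq> [] \<and> hd p = u \<and> last p = v \<and> distinct p \<and>
     set p \<subseteq> V \<and> path_edges p \<subseteq> E"

definition connected_graph :: "'a set \<Rightarrow> 'a set set \<Rightarrow> bool" where
  "connected_graph V E \<longleftrightarrow> (\<forall>u\<in>V. \<forall>v\<in>V. \<exists>p. is_path V E p u v)"

definition is_cycle :: "'a set \<Rightarrow> 'a set set \<Rightarrow> 'a list \<Rightarrow> bool" where
  "is_cycle V E c \<longleftrightarrow> length c \<ge> 3 \<and> distinct c \<and> set c \<subseteq> V \<and>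
     path_edges c \<subseteq> E \<and> {last c, hd c} \<in> E"

definition is_tree :: "'a set \<Rightarrow> 'a set set \<Rightarrow> bool" where
  "is_tree V E \<longleftrightarrow> simple_graph V E \<and> V \<noteq> {} \<and> connected_graph V E \<and>
     (\<nexists>c. is_cycle V E c)"

definition degree :: "'a set set \<Rightarrow> 'a \<Rightarrow> nat" where
  "degree E v = card {e \<in> E. v \<in> e}"

definition is_leaf :: "'a set \<Rightarrow> 'a set set \<Rightarrow> 'a \<Rightarrow> bool" where
  "is_leaf V E v \<longleftrightarrow> v \<in> V \<and> degree E v = 1"

definition two_matching :: "'a set set \<Rightarrow> 'a set set \<Rightarrow> bool" where
  "two_matching E M \<longleftrightarrow> M \<subseteq> E \<and> (\<forall>v. card {e \<in> M. v \<in> e} \<le> 2)"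

definition maximal_two_matching :: "'a set set \<Rightarrow> 'a set set \<Rightarrow> bool" where
  "maximal_two_matching E M \<longleftrightarrow> two_matching E M \<and>
     \<not> (\<exists>N. two_matching E N \<and> M \<subset> N)"

end

theory Submission
  imports Defs
begin


definition mdeg :: "'a set set \<Rightarrow> 'a \<Rightarrow> nat" where
  "mdeg M v = card {e \<in> M. v \<in> e}"

fun okp :: "'a set set \<Rightarrow> 'a list \<Rightarrow> bool" where
  "okp M (x # y # xs) = (({x, y} \<in> M \<or> mdeg M y = 2) \<and> okp M (y # xs))"
| "okp M _ = True"

fun cnt :: "'a set set \<Rightarrow> 'a list \<Rightarrow> nat" where
  "cnt M (x # y # xs) = (if {x, y} \<in> M then 0 else 1) + cnt M (y # xs)"
| "cnt M _ = 0"

definition tp :: "'a set \<Rightarrow> 'a set set \<Rightarrow> 'a list \<Rightarrow> bool" where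
  "tp V E p \<longleftrightarrow> p \<noteq> [] \<and> distinct p \<and> set p \<subseteq> V \<and> path_edges p \<subseteq> E"

lemma pe_snoc: "xs \<noteq> [] \<Longrightarrow> path_edges (xs @ [y]) = insert {last xs, y} (path_edges xs)"
  by (induction xs rule: path_edges.induct) auto

lemma pe_app: "path_edges (xs @ y # ys) = path_edges (xs @ [y]) \<union> path_edges (y # ys)"
  by (induction xs rule: path_edges.induct) auto

lemma pe_app2: "xs \<noteq> [] \<Longrightarrow> path_edges (xs @ ys) = path_edges xs \<union> path_edges (last xs # ys)"
  using pe_app[of "butlast xs" "last xs" ys] by (metis append_butlast_last_id append.assoc append_Cons append_Nil)

lemma cnt_app: "cnt M (xs @ y # ys) = cnt M (xs @ [y]) + cnt M (y # ys)"
  by (induction xs rule: cnt.induct) auto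

lemma cnt_app2: "xs \<noteq> [] \<Longrightarrow> cnt M (xs @ ys) = cnt M xs + cnt M (last xs # ys)"
  using cnt_app[of M "butlast xs" "last xs" ys] by (metis append_butlast_last_id append.assoc append_Cons append_Nil)

lemma ok_app: "okp M (xs @ y # ys) = (okp M (xs @ [y]) \<and> okp M (y # ys))"
  by (induction xs rule: okp.induct) auto

lemma ok_app2: "xs \<noteq> [] \<Longrightarrow> okp M (xs @ ys) = (okp M xs \<and> okp M (last xs # ys))"
  using ok_app[of M "butlast xs" "last xs" ys] by (metis append_butlast_last_id append.assoc append_Cons append_Nil)

lemma cnt_snoc: "xs \<noteq> [] \<Longrightarrow> cnt M (xs @ [y]) = cnt M xs + (if {last xs, y} \<in> M then 0 else 1)"
  using cnt_app2[of xs M "[y]"] by simp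

lemma ok_snoc: "xs \<noteq> [] \<Longrightarrow> okp M (xs @ [y]) = (okp M xs \<and> ({last xs, y} \<in> M \<or> mdeg M y = 2))"
  using ok_app2[of xs M "[y]"] by simp

lemma cnt0: "cnt M xs = 0 \<longleftrightarrow> path_edges xs \<subseteq> M"
  by (induction xs rule: cnt.induct) auto

lemma okM: "path_edges xs \<subseteq> M \<Longrightarrow> okp M xs"
  by (induction xs rule: okp.induct) auto

lemma pe_cons_mono: "path_edges l \<subseteq> path_edges (x # l)"
  by (cases l) auto

lemma pe_mono1: "path_edges xs \<subseteq> path_edges (xs @ ys)"
  by (cases "xs = []") (auto simp: pe_app2)

lemma pe_mono2: "path_edges ys \<subseteq> path_edges (xs @ ys)"
  by (induction xs) (auto intro: pe_cons_mono[THEN subsetD])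

lemma pe_rev: "path_edges (rev xs) = path_edges xs"
proof (induction xs)
  case (Cons x xs)
  show ?case
  proof (cases xs)
    case (Cons y ys)
    then have "rev xs \<noteq> []" by simp
    then show ?thesis using Cons.IH pe_snoc[of "rev xs" x] Cons
      by (simp add: last_rev insert_commute)
  qed simp
qed simp

lemma last_edge: "length l \<ge> 2 \<Longrightarrow> {last (butlast l), last l} \<in> path_edges l"
proof -
  assume a: "length l \<ge> 2"
  then have ne: "butlast l \<noteq> []" by (cases l) auto
  have lne: "l \<noteq> []" using a by auto
  have "path_edges l = path_edges (butlast l @ [last l])" using lne by simp
  also have "\<dots> = insert {last (butlast l), last l} (path_edges (butlast l))" using pe_snoc[OF ne] .
  finally show ?thesis by simp
qed

lemma first_edge: "length l \<ge> 2 \<Longrightarrow> {hd l, hd (tl l)} \<in> path_edges l"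
  by (cases l rule: path_edges.cases) auto

lemma tp_snoc: "xs \<noteq> [] \<Longrightarrow> tp V E (xs @ [y]) \<longleftrightarrow> tp V E xs \<and> y \<notin> set xs \<and> y \<in> V \<and> {last xs, y} \<in> E"
  unfolding tp_def using pe_snoc[of xs y] by auto

lemma tp_prefix: "tp V E (xs @ ys) \<Longrightarrow> xs \<noteq> [] \<Longrightarrow> tp V E xs"
  unfolding tp_def using pe_mono1[of xs ys] by auto

lemma tp_suffix: "tp V E (xs @ ys) \<Longrightarrow> ys \<noteq> [] \<Longrightarrow> tp V E ys"
  unfolding tp_def using pe_mono2[of ys xs] by auto

lemma tp_rev: "tp V E xs \<Longrightarrow> tp V E (rev xs)"
  unfolding tp_def by (simp add: pe_rev)

lemma hd_ne_last: "distinct l \<Longrightarrow> length l \<ge> 2 \<Longrightarrow> hd l \<noteq> last l"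
  by (cases l) auto



locale tm =
  fixes V :: "'a set" and E M :: "'a set set"
  assumes tree: "is_tree V E" and c2: "2 \<le> card V" and mx: "maximal_two_matching E M"
begin

lemma sg: "simple_graph V E" using tree by (simp add: is_tree_def)
lemma finV: "finite V" using sg by (simp add: simple_graph_def)
lemma edge_form: "x \<in> E \<Longrightarrow> \<exists>a b. a \<noteq> b \<and> a \<in> V \<and> b \<in> V \<and> x = {a, b}"
  using sg by (auto simp: simple_graph_def)
lemma edge_ne: "{a, b} \<in> E \<Longrightarrow> a \<noteq> b \<and> a \<in> V \<and> b \<in> V"
  using edge_form[of "{a,b}"] by (auto simp: doubleton_eq_iff)
lemma EPow: "E \<subseteq> Pow V" using edge_form by blast
lemma finE: "finite E" using EPow finV by (meson finite_Pow_iff finite_subset)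
lemma ME: "M \<subseteq> E" using mx by (simp add: maximal_two_matching_def two_matching_def)
lemma finM: "finite M" using ME finE finite_subset by blast
lemma md_le2: "mdeg M v \<le> 2" using mx by (simp add: maximal_two_matching_def two_matching_def mdeg_def)
lemma nocyc: "\<not> is_cycle V E c" using tree by (simp add: is_tree_def)

lemma maxfact:
  assumes "{x, y} \<in> E" "{x, y} \<notin> M" "mdeg M x < 2"
  shows "mdeg M y = 2"
proof (rule ccontr)
  assume "mdeg M y \<noteq> 2"
  then have y: "mdeg M y < 2" using md_le2[of y] by simp
  define N where "N = insert {x, y} M"
  have "two_matching E N"
    unfolding two_matching_def
  proof (intro conjI allI)
    show "N \<subseteq> E" using ME assms(1) N_def by auto
  next
    fix v
    have fin: "finite {e \<in> M. v \<in> e}" using finM by simp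
    show "card {e \<in> N. v \<in> e} \<le> 2"
    proof (cases "v \<in> {x, y}")
      case True
      then have "{e \<in> N. v \<in> e} = insert {x, y} {e \<in> M. v \<in> e}" using N_def by auto
      then have "card {e \<in> N. v \<in> e} \<le> card {e \<in> M. v \<in> e} + 1"
        using card_insert_le_m1 fin by (simp add: card_insert_if)
      moreover have "card {e \<in> M. v \<in> e} < 2" using True y assms(3) by (auto simp: mdeg_def)
      ultimately show ?thesis by simp
    next
      case False
      then have "{e \<in> N. v \<in> e} = {e \<in> M. v \<in> e}" using N_def by auto
      then show ?thesis using md_le2[of v] by (simp add: mdeg_def)
    qed
  qed
  moreover have "M \<subset> N" using N_def assms(2) by auto
  ultimately show False using mx by (auto simp: maximal_two_matching_def)
qed

lemma two_edges:
  assumes "{v, a} \<in> M" "{v, b} \<in> M" "a \<noteq> b"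
  shows "2 \<le> mdeg M v"
proof -
  have "{v,a} \<noteq> {v,b}" using assms(3) by (auto simp: doubleton_eq_iff)
  then have "card {{v,a},{v,b}} = 2" by simp
  moreover have "{{v,a},{v,b}} \<subseteq> {e \<in> M. v \<in> e}" using assms by auto
  ultimately show ?thesis unfolding mdeg_def using finM
    by (metis (no_types, lifting) card_mono finite_subset mem_Collect_eq subsetI)
qed

lemma one_edge: "{v, w} \<in> M \<Longrightarrow> 1 \<le> mdeg M v"
  unfolding mdeg_def using finM
  by (metis (no_types, lifting) One_nat_def Suc_leI card_gt_0_iff empty_iff finite_subset insertI1 mem_Collect_eq subsetI)

lemma other_edge:
  assumes "mdeg M v = 2"
  shows "\<exists>w. {v, w} \<in> M \<and> w \<noteq> d \<and> w \<noteq> v"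
proof -
  let ?A = "{e \<in> M. v \<in> e}"
  have "card (?A - {{v, d}}) \<ge> 1"
    using assms unfolding mdeg_def
    by (metis (no_types, lifting) One_nat_def card_Diff_singleton_if diff_Suc_1 nat_le_linear not_less_eq_eq numeral_2_eq_2 le_Suc_eq)
  then obtain x where x: "x \<in> M" "v \<in> x" "x \<noteq> {v, d}"
    by (metis (no_types, lifting) DiffE One_nat_def card.empty ex_in_conv mem_Collect_eq not_one_le_zero singletonI)
  obtain a b where ab: "a \<noteq> b" "x = {a, b}" using edge_form x(1) ME by blast
  show ?thesis
  proof (cases "v = a")
    case True
    then show ?thesis using x ab by (intro exI[of _ b]) auto
  next
    case False
    then have "v = b" using x ab by auto
    then show ?thesis using x ab by (intro exI[of _ a]) (auto simp: insert_commute)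
  qed
qed

lemma some_edge:
  assumes "mdeg M v \<noteq> 0"
  shows "\<exists>w. {v, w} \<in> M \<and> w \<noteq> v"
proof -
  have "{e \<in> M. v \<in> e} \<noteq> {}" using assms unfolding mdeg_def by (metis card.empty)
  then obtain x where x: "x \<in> M" "v \<in> x" by blast
  obtain a b where ab: "a \<noteq> b" "x = {a, b}" using edge_form x(1) ME by blast
  then show ?thesis using x by (auto simp: insert_commute)
qed

lemma leaf_lemma:
  assumes "e \<in> V" "{d, e} \<in> E" "\<And>y. {e, y} \<in> E \<Longrightarrow> y = d"
  shows "is_leaf V E e"
proof -
  have "{x \<in> E. e \<in> x} = {{d, e}}"
  proof (rule set_eqI, rule iffI)
    fix x assume "x \<in> {x \<in> E. e \<in> x}"
    then have x: "x \<in> E" "e \<in> x" by auto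
    obtain a b where ab: "a \<noteq> b" "x = {a, b}" using edge_form x(1) by blast
    show "x \<in> {{d, e}}"
    proof (cases "e = a")
      case True then show ?thesis using ab x assms(3)[of b] by (auto simp: insert_commute)
    next
      case False then have "e = b" using ab x by auto
      then have "x = {d, e}" using ab x assms(3)[of a] by (auto simp: insert_commute)
      then show ?thesis by simp
    qed
  next
    fix x assume "x \<in> {{d, e}}"
    then show "x \<in> {x \<in> E. e \<in> x}" using assms by auto
  qed
  then show ?thesis using assms(1) by (simp add: is_leaf_def degree_def)
qed

lemma tp_len: "tp V E q \<Longrightarrow> length q \<le> card V"
  unfolding tp_def using finV by (metis card_mono distinct_card)

lemma backedge:
  assumes q: "tp V E q" and e: "{last q, y} \<in> E" and y: "y \<in> set q"
  shows "y = last (butlast q) \<and> 2 \<le> length q"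
proof -
  obtain i where i: "i < length q" "q ! i = y" using y by (metis in_set_conv_nth)
  have ne: "y \<noteq> last q" using edge_ne[OF e] by auto
  have qne: "q \<noteq> []" using q by (simp add: tp_def)
  have dq: "distinct q" using q by (simp add: tp_def)
  have "i \<noteq> length q - 1" using i ne qne by (metis last_conv_nth)
  then have i2: "i + 2 \<le> length q" using i by linarith
  show ?thesis
  proof (cases "i + 2 = length q")
    case True
    have "last (butlast q) = butlast q ! (length (butlast q) - 1)"
    proof (rule last_conv_nth)
      have "length (butlast q) = i + 1" using True by simp
      then show "butlast q \<noteq> []" by (cases "butlast q") simp_all
    qed
    also have "\<dots> = q ! i" using True by (simp add: nth_butlast flip: True)
    finally show ?thesis using i True by simp
  next
    case False
    then have i3: "i + 3 \<le> length q" using i2 by linarith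
    define c where "c = drop i q"
    have "is_cycle V E c"
      unfolding is_cycle_def
    proof (intro conjI)
      show "3 \<le> length c" using i3 c_def by simp
      show "distinct c" using dq c_def by simp
      show "set c \<subseteq> V" using q c_def unfolding tp_def by (meson order_trans set_drop_subset)
      show "path_edges c \<subseteq> E" using q c_def pe_mono2[of "drop i q" "take i q"] unfolding tp_def by (metis append_take_drop_id subset_trans)
      have "last c = last q" using c_def i by (simp add: last_drop)
      moreover have "hd c = y" using c_def i by (simp add: hd_drop_conv_nth)
      ultimately show "{last c, hd c} \<in> E" using e by simp
    qed
    then show ?thesis using nocyc by blast
  qed
qed

lemma cross:
  "tp V E (xs @ [c]) \<Longrightarrow> tp V E (c # ys) \<Longrightarrow> (xs \<noteq> [] \<Longrightarrow> ys \<noteq> [] \<Longrightarrow> hd ys \<noteq> last xs)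
   \<Longrightarrow> tp V E (xs @ c # ys)"
proof (induction ys rule: rev_induct)
  case Nil then show ?case by simp
next
  case (snoc y zs)
  have t1: "tp V E (c # zs)" using snoc.prems(2) tp_prefix[of V E "c # zs" "[y]"] by simp
  have h1: "xs \<noteq> [] \<Longrightarrow> zs \<noteq> [] \<Longrightarrow> hd zs \<noteq> last xs" using snoc.prems(3) by simp
  have IH: "tp V E (xs @ c # zs)" using snoc.IH[OF snoc.prems(1) t1 h1] .
  have s: "y \<notin> set (c # zs)" "y \<in> V" "{last (c # zs), y} \<in> E"
    using snoc.prems(2) tp_snoc[of "c # zs"] by auto
  have l: "last (xs @ c # zs) = last (c # zs)" by simp
  have "y \<notin> set xs"
  proof
    assume yx: "y \<in> set xs"
    have bk: "y = last (butlast (xs @ c # zs))"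
      using backedge[OF IH, of y] s(3) l yx by simp
    show False
    proof (cases "zs = []")
      case True
      then have "y = last xs" using bk by (simp add: butlast_append)
      then show False using snoc.prems(3) yx True by (cases xs) auto
    next
      case False
      then have "last (butlast (xs @ c # zs)) = last (c # butlast zs)"
        by (simp add: butlast_append)
      moreover have "last (c # butlast zs) \<in> set (c # zs)"
        by (metis in_set_butlastD last_in_set list.distinct(1) list.set_intros(1) set_ConsD list.set_intros(2))
      ultimately show False using bk s(1) by simp
    qed
  qed
  then have "tp V E ((xs @ c # zs) @ [y])"
    using tp_snoc[of "xs @ c # zs"] IH s l by auto
  then show ?case by simp
qed

lemma ext:
  "tp V E q \<Longrightarrow> 2 \<le> length q \<Longrightarrow> {last (butlast q), last q} \<in> M \<Longrightarrow>
   \<exists>r. tp V E (q @ r) \<and> path_edges (last q # r) \<subseteq> M \<and> mdeg M (last (q @ r)) \<le> 1"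
proof (induction "card V - length q" arbitrary: q rule: less_induct)
  case less
  show ?case
  proof (cases "mdeg M (last q) \<le> 1")
    case True then show ?thesis by (intro exI[of _ "[]"]) (simp add: less.prems)
  next
    case False
    then have "mdeg M (last q) = 2" using md_le2[of "last q"] by simp
    then obtain w where w: "{last q, w} \<in> M" "w \<noteq> last (butlast q)" "w \<noteq> last q"
      using other_edge by blast
    have wE: "{last q, w} \<in> E" using w ME by auto
    have wq: "w \<notin> set q" using backedge[OF less.prems(1) wE] w(2) by blast
    have qne: "q \<noteq> []" using less.prems(1) by (simp add: tp_def)
    have t: "tp V E (q @ [w])" using tp_snoc[OF qne] less.prems(1) wq wE edge_ne[OF wE] by simp
    have lt: "card V - length (q @ [w]) < card V - length q" using tp_len[OF t] by simp
    have "\<exists>r. tp V E ((q @ [w]) @ r) \<and> path_edges (last (q @ [w]) # r) \<subseteq> M \<and>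
      mdeg M (last ((q @ [w]) @ r)) \<le> 1"
      by (rule less.hyps[OF lt t]) (use w(1) qne less.prems(2) in auto)
    then obtain r where r: "tp V E ((q @ [w]) @ r)" "path_edges (last (q @ [w]) # r) \<subseteq> M"
      "mdeg M (last ((q @ [w]) @ r)) \<le> 1" by blast
    show ?thesis
      by (intro exI[of _ "w # r"]) (use r w(1) in \<open>auto simp: tp_def\<close>)
  qed
qed

end


context tm begin

definition S where "S = {p. tp V E p \<and> okp M p}"
definition f where "f p = cnt M p * (card V + 1) + length p"

lemma finS: "finite S"
proof -
  have "S \<subseteq> {p. set p \<subseteq> V \<and> length p \<le> card V}"
    using tp_len unfolding S_def tp_def by auto
  then show ?thesis using finite_lists_length_le[OF finV] finite_subset by blast
qed

lemma lb_lemma: "length l \<ge> 2 \<Longrightarrow> butlast l \<noteq> []"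
  by (cases l) auto

lemma decomp: "\<not> path_edges p \<subseteq> M \<Longrightarrow>
  \<exists>a c b. p = a @ [c] @ b \<and> a \<noteq> [] \<and> {last a, c} \<notin> M \<and> path_edges (c # b) \<subseteq> M"
proof (induction p)
  case Nil then show ?case by simp
next
  case (Cons x p')
  show ?case
  proof (cases "path_edges p' \<subseteq> M")
    case False
    then obtain a c b where "p' = a @ [c] @ b" "a \<noteq> []" "{last a, c} \<notin> M" "path_edges (c # b) \<subseteq> M"
      using Cons.IH by blast
    then show ?thesis by (intro exI[of _ "x # a"] exI[of _ c] exI[of _ b]) auto
  next
    case True
    then obtain y p'' where pp: "p' = y # p''" using Cons.prems by (cases p') auto
    then have "{x, y} \<notin> M" using Cons.prems True by simp
    then show ?thesis using pp True by (intro exI[of _ "[x]"] exI[of _ y] exI[of _ p'']) auto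
  qed
qed

lemma main: "\<exists>u v p. is_leaf V E u \<and> is_leaf V E v \<and> u \<noteq> v \<and>
           is_path V E p u v \<and> path_edges p \<subseteq> M"
proof -
  have "V \<noteq> {}" using c2 by auto
  then obtain x0 where x0: "x0 \<in> V" by blast
  have "[x0] \<in> S" using x0 by (simp add: S_def tp_def)
  then have Sne: "f ` S \<noteq> {}" by blast
  define m where "m = Max (f ` S)"
  have "m \<in> f ` S" using Max_in[OF finite_imageI[OF finS] Sne] m_def by simp
  then obtain p where pS: "p \<in> S" and pm: "f p = m" by blast
  have pmax: "\<And>q. q \<in> S \<Longrightarrow> f q \<le> f p"
    using pm m_def finS by (simp add: Max_ge)
  have tpp: "tp V E p" and okpp: "okp M p" using pS by (auto simp: S_def)
  have pne: "p \<noteq> []" using tpp by (simp add: tp_def)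
  have lenS: "\<And>q. q \<in> S \<Longrightarrow> length q \<le> card V" using tp_len by (simp add: S_def)
  have bigger: "\<And>q. q \<in> S \<Longrightarrow> cnt M q > cnt M p \<Longrightarrow> False"
  proof -
    fix q assume q: "q \<in> S" "cnt M q > cnt M p"
    have "(cnt M p + 1) * (card V + 1) \<le> cnt M q * (card V + 1)"
      using q(2) by (intro mult_le_mono1) simp
    then have "f p < f q" using lenS[OF pS] unfolding f_def by simp
    then show False using pmax[OF q(1)] by simp
  qed
  have noext: "\<And>y. tp V E (p @ [y]) \<Longrightarrow> {last p, y} \<in> M \<or> mdeg M y = 2 \<Longrightarrow> False"
  proof -
    fix y assume y: "tp V E (p @ [y])" "{last p, y} \<in> M \<or> mdeg M y = 2"
    have "p @ [y] \<in> S" using y okpp ok_snoc[OF pne] by (simp add: S_def)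
    moreover have "cnt M p \<le> cnt M (p @ [y])" using cnt_snoc[OF pne] by simp
    then have "f p < f (p @ [y])" unfolding f_def
      by (metis add_le_less_mono length_append_singleton lessI mult_le_mono1)
    ultimately show False using pmax[of "p @ [y]"] by linarith
  qed
  have LemmaB: "\<And>q. q \<in> S \<Longrightarrow> cnt M q \<ge> cnt M p \<Longrightarrow> length q \<ge> 2 \<Longrightarrow>
      {last (butlast q), last q} \<in> M \<Longrightarrow> mdeg M (last q) \<le> 1 \<Longrightarrow> is_leaf V E (last q)"
  proof -
    fix q assume q: "q \<in> S" "cnt M q \<ge> cnt M p" "length q \<ge> 2"
      "{last (butlast q), last q} \<in> M" "mdeg M (last q) \<le> 1"
    have tq: "tp V E q" and oq: "okp M q" using q(1) by (auto simp: S_def)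
    have qne: "q \<noteq> []" using tq by (simp add: tp_def)
    have nb: "\<And>y. {last q, y} \<in> E \<Longrightarrow> y = last (butlast q)"
    proof (rule ccontr)
      fix y assume y: "{last q, y} \<in> E" "y \<noteq> last (butlast q)"
      have yq: "y \<notin> set q"
      proof
        assume "y \<in> set q"
        then have "y = last (butlast q)" using backedge[OF tq y(1)] by simp
        then show False using y(2) by simp
      qed
      have "{last q, y} \<notin> M"
      proof
        assume "{last q, y} \<in> M"
        moreover have "{last q, last (butlast q)} \<in> M" using q(4) by (simp add: insert_commute)
        ultimately have "2 \<le> mdeg M (last q)" using two_edges[of "last q" y "last (butlast q)"] y(2) by simp
        then show False using q(5) by simp
      qed
      then have "mdeg M y = 2" using maxfact y(1) q(5) by simp
      have "tp V E (q @ [y])" using tp_snoc[OF qne] tq yq y(1) edge_ne[OF y(1)] by simp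
      moreover have "okp M (q @ [y])" using oq ok_snoc[OF qne] \<open>mdeg M y = 2\<close> by simp
      ultimately have "q @ [y] \<in> S" by (simp add: S_def)
      moreover have "cnt M (q @ [y]) > cnt M p" using cnt_snoc[OF qne, of M y] \<open>{last q, y} \<notin> M\<close> q(2)
        by simp
      ultimately show False using bigger by blast
    qed
    have "last q \<in> V" using tq qne unfolding tp_def by auto
    moreover have "{last (butlast q), last q} \<in> E" using q(4) ME by auto
    ultimately show "is_leaf V E (last q)" using leaf_lemma[of "last q" "last (butlast q)"] nb by simp
  qed
  have plen: "length p \<ge> 2"
  proof (rule ccontr)
    assume "\<not> length p \<ge> 2"
    then have "length p = 1" using pne length_greater_0_conv[of p] by linarith
    then obtain e where pe: "p = [e]" by (metis One_nat_def length_0_conv length_Suc_conv)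
    have eV: "e \<in> V" using tpp pe by (simp add: tp_def)
    show False
    proof (cases "mdeg M e = 0")
      case False
      then obtain w where w: "{e, w} \<in> M" "w \<noteq> e" using some_edge by blast
      have "{e, w} \<in> E" using w ME by auto
      then have "tp V E (p @ [w])" using pe eV w edge_ne by (simp add: tp_def)
      then show False using noext[of w] w pe by simp
    next
      case True
      obtain z where z: "z \<in> V" "z \<noteq> e"
      proof (rule ccontr)
        assume "\<not> thesis"
        then have "V \<subseteq> {e}" using that by blast
        then have "card V \<le> 1" using card_mono[of "{e}" V] by simp
        then show False using c2 by simp
      qed
      obtain pp where pp: "is_path V E pp e z" using tree eV z unfolding is_tree_def connected_graph_def by blast
      have "length pp \<ge> 2"
      proof (rule ccontr)
        assume "\<not> length pp \<ge> 2"
        moreover have "pp \<noteq> []" using pp unfolding is_path_def by simp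
        ultimately have "length pp = 1" using length_greater_0_conv[of pp] by linarith
        then obtain t where "pp = [t]" by (metis One_nat_def length_0_conv length_Suc_conv)
        then show False using pp z(2) unfolding is_path_def by auto
      qed
      then have "{hd pp, hd (tl pp)} \<in> E" using first_edge pp unfolding is_path_def by blast
      then have ey: "{e, hd (tl pp)} \<in> E" using pp unfolding is_path_def by simp
      have "{e, hd (tl pp)} \<notin> M" using one_edge[of e "hd (tl pp)"] True by linarith
      then have "mdeg M (hd (tl pp)) = 2" using maxfact ey True by simp
      moreover have "tp V E (p @ [hd (tl pp)])" using pe eV ey edge_ne[OF ey] by (simp add: tp_def)
      ultimately show False using noext[of "hd (tl pp)"] by blast
    qed
  qed
  have pMd: "mdeg M (last p) \<le> 1"
  proof (rule ccontr)
    assume "\<not> mdeg M (last p) \<le> 1"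
    then have "mdeg M (last p) = 2" using md_le2[of "last p"] by simp
    then obtain w where w: "{last p, w} \<in> M" "w \<noteq> last (butlast p)" using other_edge by blast
    have wE: "{last p, w} \<in> E" using w ME by auto
    have "w \<notin> set p"
    proof
      assume "w \<in> set p"
      then have "w = last (butlast p)" using backedge[OF tpp wE] by simp
      then show False using w(2) by simp
    qed
    then have "tp V E (p @ [w])" using tp_snoc[OF pne] tpp wE edge_ne[OF wE] by simp
    then show False using noext[of w] w by blast
  qed
  have pM: "{last (butlast p), last p} \<in> M"
  proof (rule ccontr)
    assume nM: "{last (butlast p), last p} \<notin> M"
    have bne: "butlast p \<noteq> []" using lb_lemma plen .
    have "okp M (butlast p @ [last p])" using okpp pne by simp
    then have "mdeg M (last p) = 2" using ok_snoc[OF bne] nM by simp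
    then show False using pMd by simp
  qed
  have pleaf: "is_leaf V E (last p)" using LemmaB[OF pS order.refl plen pM pMd] .
  show ?thesis
  proof (cases "cnt M p = 0")
    case True
    then have peM: "path_edges p \<subseteq> M" using cnt0 by blast
    define q where "q = rev p"
    have tq: "tp V E q" using tp_rev tpp q_def by blast
    have qlen: "length q \<ge> 2" using plen q_def by simp
    have qM: "path_edges q \<subseteq> M" using peM pe_rev q_def by metis
    have "{last (butlast q), last q} \<in> M" using last_edge[OF qlen] qM by blast
    then obtain r where r: "tp V E (q @ r)" "path_edges (last q # r) \<subseteq> M" "mdeg M (last (q @ r)) \<le> 1"
      using ext[OF tq qlen] by blast
    have qne: "q \<noteq> []" using tq by (simp add: tp_def)
    have LM: "path_edges (q @ r) \<subseteq> M" using pe_app2[OF qne, of r] qM r(2) by simp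
    have Llen: "length (q @ r) \<ge> 2" using qlen by simp
    have "q @ r \<in> S" using r(1) okM[OF LM] by (simp add: S_def)
    moreover have "cnt M (q @ r) = 0" using cnt0 LM by blast
    ultimately have leaf2: "is_leaf V E (last (q @ r))"
      using LemmaB[of "q @ r"] Llen last_edge[OF Llen] LM r(3) True by auto
    have hdL: "hd (q @ r) = last p" using qne q_def by (simp add: hd_rev)
    have "hd (q @ r) \<noteq> last (q @ r)" using hd_ne_last[of "q @ r"] r(1) Llen unfolding tp_def by blast
    then show ?thesis using leaf2 pleaf hdL r(1) LM
      by (intro exI[of _ "last p"] exI[of _ "last (q @ r)"] exI[of _ "q @ r"])
        (auto simp: is_path_def tp_def)
  next
    case False
    then have "\<not> path_edges p \<subseteq> M" using cnt0[of M p] by simp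
    then obtain a c b where abc: "p = a @ [c] @ b" "a \<noteq> []" "{last a, c} \<notin> M" "path_edges (c # b) \<subseteq> M"
      using decomp by blast
    have bne: "b \<noteq> []"
    proof
      assume "b = []"
      then have "last (butlast p) = last a" "last p = c" using abc by auto
      then show False using pM abc(3) by simp
    qed
    have ac: "a @ [c] \<noteq> []" by simp
    have okac: "okp M (a @ [c])" using okpp ok_app2[OF ac, of M b] abc(1) by simp
    then have mc: "mdeg M c = 2" using ok_snoc[OF abc(2)] abc(3) by simp
    obtain w where w: "{c, w} \<in> M" "w \<noteq> hd b" "w \<noteq> c" using other_edge[OF mc] by blast
    have wE: "{c, w} \<in> E" using w ME by auto
    have tcb: "tp V E (c # b)" using tp_suffix[of V E a "c # b"] tpp abc(1) by simp
    have tac: "tp V E (a @ [c])" using tp_prefix[of V E "a @ [c]" b] tpp abc(1) by simp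
    define q where "q = rev b @ [c]"
    have tq: "tp V E q" using tp_rev[OF tcb] q_def by simp
    have lq: "last q = c" using q_def by simp
    have blq: "last (butlast q) = hd b" using q_def bne by (simp add: last_rev)
    have qne: "q \<noteq> []" using q_def by simp
    have wq: "w \<notin> set q"
    proof
      assume "w \<in> set q"
      then have "w = last (butlast q)" using backedge[OF tq] wE lq by simp
      then show False using w(2) blq by simp
    qed
    have tqw: "tp V E (q @ [w])" using tp_snoc[OF qne] tq wq wE edge_ne[OF wE] lq by simp
    have lqw: "2 \<le> length (q @ [w])" using q_def bne by simp
    have "{last (butlast (q @ [w])), last (q @ [w])} \<in> M" using w(1) lq by simp
    then obtain r where r: "tp V E ((q @ [w]) @ r)" "path_edges (last (q @ [w]) # r) \<subseteq> M"
      "mdeg M (last ((q @ [w]) @ r)) \<le> 1"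
      using ext[OF tqw lqw] by blast
    have wrM: "path_edges (w # r) \<subseteq> M" using r(2) by simp
    define L where "L = rev b @ c # w # r"
    have LL: "L = (q @ [w]) @ r" using L_def q_def by simp
    have tL: "tp V E L" using r(1) LL by simp
    have qM: "path_edges q \<subseteq> M" using abc(4) q_def pe_rev[of "c # b"] by simp
    have cwrM: "path_edges (c # w # r) \<subseteq> M" using wrM w(1) by simp
    have LM: "path_edges L \<subseteq> M"
    proof -
      have "path_edges L = path_edges q \<union> path_edges (c # w # r)"
        using pe_app2[OF qne, of "w # r"] L_def q_def by simp
      then show ?thesis using qM cwrM by simp
    qed
    define L' where "L' = a @ c # w # r"
    have tcwr: "tp V E (c # w # r)" using tp_suffix[of V E "rev b" "c # w # r"] tL L_def by simp
    have wa: "w \<noteq> last a" using w(1) abc(3) by (auto simp: insert_commute)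
    have tL': "tp V E L'" using cross[OF tac tcwr] wa L'_def by simp
    have okL': "okp M L'" using ok_app2[OF ac, of M "w # r"] okac okM[OF cwrM] L'_def by simp
    have "cnt M L' = cnt M (a @ [c]) + cnt M (c # w # r)" using cnt_app2[OF ac, of M "w # r"] L'_def by simp
    moreover have "cnt M p = cnt M (a @ [c]) + cnt M (c # b)" using cnt_app2[OF ac, of M b] abc(1) by simp
    moreover have "cnt M (c # w # r) = 0" "cnt M (c # b) = 0" using cwrM abc(4) cnt0 by blast+
    ultimately have cntL': "cnt M L' = cnt M p" by simp
    have L'S: "L' \<in> S" using tL' okL' by (simp add: S_def)
    have L'len: "2 \<le> length L'" using L'_def by simp
    have lbL': "last (butlast L') = last (butlast (c # w # r))" using L'_def by (simp add: butlast_append)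
    have lL': "last L' = last (c # w # r)" using L'_def by simp
    have "{last (butlast (c # w # r)), last (c # w # r)} \<in> M"
      using last_edge[of "c # w # r"] cwrM by auto
    then have eM: "{last (butlast L'), last L'} \<in> M" using lbL' lL' by simp
    have lL: "last L = last L'" using L_def L'_def by simp
    have mL': "mdeg M (last L') \<le> 1" using r(3) LL lL by simp
    have leaf2: "is_leaf V E (last L)" using LemmaB[OF L'S _ L'len eM mL'] cntL' lL by simp
    have hdL: "hd L = last p" using L_def abc(1) bne by (simp add: hd_rev)
    have Llen: "2 \<le> length L" using L_def by simp
    have "hd L \<noteq> last L" using hd_ne_last[of L] tL Llen unfolding tp_def by blast
    then show ?thesis using leaf2 pleaf hdL tL LM
      by (intro exI[of _ "last p"] exI[of _ "last L"] exI[of _ L])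
        (auto simp: is_path_def tp_def)
  qed
qed

end

theorem proposition2p3:
  fixes V :: "'a set" and E M :: "'a set set"
  assumes "is_tree V E"
    and "card V \<ge> 2"
    and "maximal_two_matching E M"
  shows "\<exists>u v p. is_leaf V E u \<and> is_leaf V E v \<and> u \<noteq> v \<and>
           is_path V E p u v \<and> path_edges p \<subseteq> M"
proof -
  interpret tm V E M using assms by unfold_locales
  show ?thesis using main .
qed

end
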